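(* For the invertible $N$-component coupled KdV hierarchy (defined in the context), the one-forms $\gamma_s$ are local for all $s\in\mathbf Z$.
   Context: Let $N\ge1$, $\partial=\partial/\partial x$, $\partial^{-1}$ a formal inverse of $\partial$. Let $u_0,\dots,u_{N-1}$ be smooth functions of $(x,t)$, set $u_N=-1$, and let $\varepsilon_1,\dots,\varepsilon_{N-1}$ be real constants, $\varepsilon_0=\varepsilon_N=0$. Put $J_i=\frac14\varepsilon_i\partial^3+\frac12(u_i\partial+\partial u_i)$, so $J_0=\frac12(u_0\partial+\partial u_0)$ and $J_N=-\partial$, both invertible. Formal adjoint: $\partial^\dagger=-\partial$, multiplication operators self-adjoint, $(AB)^\dagger=B^\dagger A^\dagger$, transpose for matrices. Let $R$ be the $N\times N$ matrix operator with $R_{ij}=\delta_{i,j+1}$ ($1\le j\le N-1$) and $R_{iN}=-J_{i-1}J_N^{-1}$; $R$ is invertible. One-forms: $\gamma_0=(0,\dots,0,2)^T$, $\gamma_{-1}=(u_0^{-1/2},0,\dots,0)^T$, and for $s\ge1$, $\gamma_s=(R^\dagger)^s\gamma_0$, $\gamma_{-s}=((R^{-1})^\dagger)^{s-1}\gamma_{-1}$. A one-form is local if each component is a function of $u_0,\dots,u_{N-1}$ and finitely many of their $x$-derivatives (no $\partial^{-1}$ appears). *)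

theory Defs
  imports "HOL-Analysis.Analysis"
begin

text \<open>Jet coordinates: j i k is the value of the k-th x-derivative of u_i.\<close>
type_synonym jet = "nat \<Rightarrow> nat \<Rightarrow> real"

definition smooth_fun :: "(real \<Rightarrow> real) \<Rightarrow> bool" where
  "smooth_fun f \<longleftrightarrow> (\<forall>k x. (deriv ^^ k) f differentiable (at x))"

definition jet_of :: "(nat \<Rightarrow> real \<Rightarrow> real) \<Rightarrow> real \<Rightarrow> jet" where
  "jet_of u x = (\<lambda>i k. (deriv ^^ k) (u i) x)"

definition local_fun :: "nat \<Rightarrow> (jet \<Rightarrow> real) \<Rightarrow> bool" where
  "local_fun N F \<longleftrightarrow> (\<exists>n. \<forall>j j'. (\<forall>i<N. \<forall>k\<le>n. j i k = j' i k) \<longrightarrow> F j = F j')"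

text \<open>Admissible fields: smooth u_0..u_{N-1} with u_0 > 0 (so u_0^(-1/2) is defined).\<close>
definition admissible :: "nat \<Rightarrow> (nat \<Rightarrow> real \<Rightarrow> real) \<Rightarrow> bool" where
  "admissible N u \<longleftrightarrow> (\<forall>i<N. smooth_fun (u i)) \<and> (\<forall>x. u 0 x > 0)"

definition uext :: "nat \<Rightarrow> (nat \<Rightarrow> real \<Rightarrow> real) \<Rightarrow> nat \<Rightarrow> real \<Rightarrow> real" where
  "uext N u i = (if i = N then (\<lambda>x. -1) else u i)"

definition Jop :: "nat \<Rightarrow> (nat \<Rightarrow> real) \<Rightarrow> (nat \<Rightarrow> real \<Rightarrow> real) \<Rightarrow> nat
                    \<Rightarrow> (real \<Rightarrow> real) \<Rightarrow> real \<Rightarrow> real" where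
  "Jop N eps u i f = (\<lambda>x. eps i / 4 * (deriv ^^ 3) f x
      + 1/2 * (uext N u i x * deriv f x + deriv (\<lambda>y. uext N u i y * f y) x))"

text \<open>gamma' = R^dagger gamma (one-forms with components indexed 1..N).
  Since (R^dagger gamma)_i = gamma_{i+1} for i<N and
  (R^dagger gamma)_N = d^{-1} (sum_{j=1}^N J_{j-1} gamma_j), the relation
  gamma' = R^dagger gamma means the following (d^{-1} being a formal inverse of d).\<close>
definition Rdag_rel :: "nat \<Rightarrow> (nat \<Rightarrow> real) \<Rightarrow> (nat \<Rightarrow> real \<Rightarrow> real)
                        \<Rightarrow> (nat \<Rightarrow> real \<Rightarrow> real) \<Rightarrow> (nat \<Rightarrow> real \<Rightarrow> real) \<Rightarrow> bool" where
  "Rdag_rel N eps u g g' \<longleftrightarrow>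
     (\<forall>i\<in>{1..<N}. \<forall>x. g' i x = g (Suc i) x) \<and>
     (\<forall>x. deriv (g' N) x = (\<Sum>j=1..N. Jop N eps u (j - 1) (g j) x))"

end

theory Submission
  imports Defs
begin


datatype ex = C real | V nat nat | P nat | Ad ex ex | Mu ex ex

fun ev :: "ex \<Rightarrow> jet \<Rightarrow> real" where
  "ev (C c) j = c"
| "ev (V i k) j = j i k"
| "ev (P k) j = (inverse (sqrt (j 0 0))) ^ k"
| "ev (Ad a b) j = ev a j + ev b j"
| "ev (Mu a b) j = ev a j * ev b j"

fun Dx :: "ex \<Rightarrow> ex" where
  "Dx (C c) = C 0"
| "Dx (V i k) = V i (Suc k)"
| "Dx (P k) = Mu (C (- real k / 2)) (Mu (P (k+2)) (V 0 1))"
| "Dx (Ad a b) = Ad (Dx a) (Dx b)"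
| "Dx (Mu a b) = Ad (Mu (Dx a) b) (Mu a (Dx b))"

fun wf :: "nat \<Rightarrow> ex \<Rightarrow> bool" where
  "wf N (C c) = True"
| "wf N (V i k) = (i < N)"
| "wf N (P k) = (0 < N)"
| "wf N (Ad a b) = (wf N a \<and> wf N b)"
| "wf N (Mu a b) = (wf N a \<and> wf N b)"

fun ordx :: "ex \<Rightarrow> nat" where
  "ordx (C c) = 0"
| "ordx (V i k) = k"
| "ordx (P k) = 0"
| "ordx (Ad a b) = max (ordx a) (ordx b)"
| "ordx (Mu a b) = max (ordx a) (ordx b)"

lemma wf_Dx: "wf N e \<Longrightarrow> wf N (Dx e)"
  by (induction e) auto

lemma wf_Dxn: "wf N e \<Longrightarrow> wf N ((Dx ^^ k) e)"
  by (induction k) (auto simp: wf_Dx)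

lemma ev_local_aux: "wf N e \<Longrightarrow> (\<forall>i<N. \<forall>k\<le>ordx e. j i k = j' i k) \<Longrightarrow> ev e j = ev e j'"
  by (induction e) auto

lemma ev_local: "wf N e \<Longrightarrow> local_fun N (ev e)"
  unfolding local_fun_def using ev_local_aux by blast

lemma deriv_inv_sqrt:
  assumes "(g has_real_derivative g1) (at x)" "g x > 0"
  shows "((\<lambda>x. inverse (sqrt (g x))) has_real_derivative (- 1/2 * (inverse (sqrt (g x)))^3 * g1)) (at x)"
  using assms by (auto intro!: derivative_eq_intros simp: power3_eq_cube divide_simps)

lemma smooth_DERIV: "smooth_fun f \<Longrightarrow> (((deriv ^^ k) f) has_real_derivative ((deriv ^^ Suc k) f x)) (at x)"
proof -
  assume "smooth_fun f"
  then have "(deriv ^^ k) f differentiable (at x)" unfolding smooth_fun_def by blast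
  then show ?thesis by (simp add: DERIV_deriv_iff_real_differentiable)
qed

lemma ev_DERIV:
  assumes "admissible N u" "wf N e"
  shows "((\<lambda>x. ev e (jet_of u x)) has_real_derivative ev (Dx e) (jet_of u x)) (at x)"
  using assms(2)
proof (induction e)
  case (C c) then show ?case by simp
next
  case (V i k)
  then have "smooth_fun (u i)" using assms(1) by (simp add: admissible_def)
  then show ?case using smooth_DERIV[of "u i" k x] by (simp add: jet_of_def)
next
  case (P k)
  then have sm: "smooth_fun (u 0)" and pos: "u 0 x > 0" using assms(1) by (auto simp: admissible_def)
  have d0: "((u 0) has_real_derivative (deriv (u 0) x)) (at x)"
    using smooth_DERIV[OF sm, of 0] by simp
  have d1: "((\<lambda>x. inverse (sqrt (u 0 x))) has_real_derivative
     (- 1/2 * (inverse (sqrt (u 0 x)))^3 * deriv (u 0) x)) (at x)"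
    by (rule deriv_inv_sqrt[OF d0 pos])
  have d2: "((\<lambda>x. (inverse (sqrt (u 0 x)))^k) has_real_derivative
     (of_nat k * ((- 1/2 * (inverse (sqrt (u 0 x)))^3 * deriv (u 0) x) * (inverse (sqrt (u 0 x)))^(k - Suc 0)))) (at x)"
    by (rule DERIV_power[OF d1])
  have eq: "of_nat k * ((- 1/2 * (inverse (sqrt (u 0 x)))^3 * deriv (u 0) x) * (inverse (sqrt (u 0 x)))^(k - Suc 0))
      = - real k / 2 * ((inverse (sqrt (u 0 x)))^(k+2) * deriv (u 0) x)"
  proof (cases k)
    case 0 then show ?thesis by simp
  next
    case (Suc m)
    have "\<And>w d::real. of_nat (Suc m) * ((- 1/2 * w^3 * d) * w^(Suc m - Suc 0)) = - real (Suc m) / 2 * (w^(Suc m+2) * d)"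
      by (simp add: power_add power3_eq_cube field_simps)
    then show ?thesis using Suc by blast
  qed
  show ?case using d2 unfolding eq by (simp add: jet_of_def)
next
  case (Ad a b) then show ?case by (auto intro!: derivative_eq_intros)
next
  case (Mu a b) then show ?case by (auto intro!: derivative_eq_intros)
qed

lemma ev_deriv:
  assumes "admissible N u" "wf N e"
  shows "deriv (\<lambda>x. ev e (jet_of u x)) = (\<lambda>x. ev (Dx e) (jet_of u x))"
  using ev_DERIV[OF assms] DERIV_imp_deriv by blast

lemma ev_derivn:
  assumes "admissible N u" "wf N e"
  shows "(deriv ^^ k) (\<lambda>x. ev e (jet_of u x)) = (\<lambda>x. ev ((Dx ^^ k) e) (jet_of u x))"
  by (induction k) (auto simp: ev_deriv[OF assms(1)] wf_Dxn[OF assms(2)])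

lemma ev_smooth:
  assumes "admissible N u" "wf N e"
  shows "smooth_fun (\<lambda>x. ev e (jet_of u x))"
  unfolding smooth_fun_def ev_derivn[OF assms]
  using ev_DERIV[OF assms(1) wf_Dxn[OF assms(2)]] real_differentiable_def by blast



definition Qr :: "(nat \<Rightarrow> real) \<Rightarrow> (nat \<Rightarrow> real) \<Rightarrow> nat \<Rightarrow> (nat \<Rightarrow> real) \<Rightarrow> (nat \<Rightarrow> real) \<Rightarrow> (nat \<Rightarrow> real) \<Rightarrow> real" where
  "Qr ep vv n F F1 F2 = (\<Sum>d\<le>n. \<Sum>p\<le>n-d. ep d / 4 * (F p * F2 (n-d-p) - 1/2 * (F1 p * F1 (n-d-p)))
        + 1/2 * (vv d * (F p * F (n-d-p))))"

lemma sum_rev_pair: "(\<Sum>p\<le>M. h p (M-p)) = (\<Sum>p\<le>(M::nat). h (M-p) p)"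
  by (rule sum.reindex_bij_witness[where i="\<lambda>p. M-p" and j="\<lambda>p. M-p"]) auto

lemma sum_antisym:
  assumes "\<And>p q. h p q = - h q (p::nat)"
  shows "(\<Sum>p\<le>M. h p (M-p)) = (0::real)"
proof -
  have "(\<Sum>p\<le>M. h p (M-p)) = (\<Sum>p\<le>M. h (M-p) p)" by (rule sum_rev_pair)
  also have "\<dots> = - (\<Sum>p\<le>M. h p (M-p))" by (simp add: assms[of "M - _"] sum_negf)
  finally show ?thesis by simp
qed

lemma tri_swap: "(\<Sum>d\<le>n. \<Sum>p\<le>n-d. G d p) = (\<Sum>p\<le>(n::nat). \<Sum>d\<le>n-p. (G d p :: real))"
proof -
  have "(\<Sum>d\<le>n. \<Sum>p\<le>n-d. G d p) = (\<Sum>(d,p)\<in>Sigma {..n} (\<lambda>d. {..n-d}). G d p)"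
    by (simp add: sum.Sigma)
  also have "\<dots> = (\<Sum>(p,d)\<in>Sigma {..n} (\<lambda>p. {..n-p}). G d p)"
    by (rule sum.reindex_bij_witness[where i="\<lambda>(p,d). (d,p)" and j="\<lambda>(d,p). (p,d)"]) auto
  also have "\<dots> = (\<Sum>p\<le>n. \<Sum>d\<le>n-p. G d p)"
    by (simp add: sum.Sigma)
  finally show ?thesis .
qed

lemma Qsplit:
  assumes "ep 0 = 0" "n \<ge> 1"
    and "\<And>p. p < n \<Longrightarrow> G p = F p \<and> G1 p = F1 p \<and> G2 p = F2 p"
    and "G n = 0" "G1 n = 0" "G2 n = 0"
  shows "Qr ep vv n F F1 F2 = Qr ep vv n G G1 G2 + vv 0 * F 0 * F n"
proof -
  define t where "t H H1 H2 d p = ep d / 4 * (H p * H2 (n-d-p) - 1/2 * (H1 p * H1 (n-d-p)))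
        + 1/2 * (vv d * (H p * H (n-d-p)))" for H H1 H2 :: "nat \<Rightarrow> real" and d p
  have Q: "Qr ep vv n H H1 H2 = (\<Sum>d\<le>n. \<Sum>p\<le>n-d. t H H1 H2 d p)" for H H1 H2
    by (simp add: Qr_def t_def)
  have sp: "(\<Sum>d\<le>n. f d) = f 0 + (\<Sum>d\<in>{1..n}. f d)" for f :: "nat \<Rightarrow> real"
    by (simp add: atMost_atLeast0 sum.atLeast_Suc_atMost)
  have rest: "(\<Sum>d\<in>{1..n}. \<Sum>p\<le>n-d. t F F1 F2 d p) = (\<Sum>d\<in>{1..n}. \<Sum>p\<le>n-d. t G G1 G2 d p)"
    by (rule sum.cong[OF refl], rule sum.cong[OF refl]) (auto simp: t_def assms(3))
  have n0: "(\<Sum>p\<le>n. h p) = h 0 + (\<Sum>p\<in>{1..<n}. h p) + h n" for h :: "nat \<Rightarrow> real"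
  proof -
    have "{..n} = insert 0 (insert n {1..<n})" using assms(2) by auto
    then show ?thesis using assms(2) by (simp add: algebra_simps)
  qed
  have mid: "(\<Sum>p\<in>{1..<n}. t F F1 F2 0 p) = (\<Sum>p\<in>{1..<n}. t G G1 G2 0 p)"
    by (rule sum.cong[OF refl]) (auto simp: t_def assms(3))
  have e0: "t F F1 F2 0 0 = t G G1 G2 0 0 + 1/2 * vv 0 * F 0 * F n"
    using assms by (simp add: t_def)
  have en: "t F F1 F2 0 n = t G G1 G2 0 n + 1/2 * vv 0 * F 0 * F n"
    using assms by (simp add: t_def)
  show ?thesis unfolding Q
    apply (subst (1 2) sp)
    apply (simp only: rest)
    apply (simp only: diff_zero n0 mid e0 en)
    done
qed

definition Jr where
  "Jr ep v v1 c c1 c3 d q x = ep d / 4 * c3 q x + 1/2 * (v d x * c1 q x + (v1 d x * c q x + v d x * c1 q x))"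

lemma Qderiv:
  fixes c c1 c2 c3 v v1 :: "nat \<Rightarrow> real \<Rightarrow> real"
  assumes dc: "\<And>p. (c p has_real_derivative c1 p x) (at x)"
    and dc1: "\<And>p. (c1 p has_real_derivative c2 p x) (at x)"
    and dc2: "\<And>p. (c2 p has_real_derivative c3 p x) (at x)"
    and dv: "\<And>d. (v d has_real_derivative v1 d x) (at x)"
  shows "((\<lambda>x. Qr ep (\<lambda>d. v d x) n (\<lambda>p. c p x) (\<lambda>p. c1 p x) (\<lambda>p. c2 p x)) has_real_derivative
     (\<Sum>p\<le>n. c p x * (\<Sum>d\<le>n-p. Jr ep v v1 c c1 c3 d (n-p-d) x))) (at x)"
proof -
  define D where "D d p = ep d / 4 * ((c1 p x * c2 (n-d-p) x + c p x * c3 (n-d-p) x)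
       - 1/2 * (c2 p x * c1 (n-d-p) x + c1 p x * c2 (n-d-p) x))
     + 1/2 * (v1 d x * (c p x * c (n-d-p) x) + v d x * (c1 p x * c (n-d-p) x + c p x * c1 (n-d-p) x))" for d p
  have der: "((\<lambda>x. Qr ep (\<lambda>d. v d x) n (\<lambda>p. c p x) (\<lambda>p. c1 p x) (\<lambda>p. c2 p x)) has_real_derivative
     (\<Sum>d\<le>n. \<Sum>p\<le>n-d. D d p)) (at x)"
  proof -
    have "((\<lambda>x. ep d / 4 * (c p x * c2 (n-d-p) x - 1/2 * (c1 p x * c1 (n-d-p) x))
        + 1/2 * (v d x * (c p x * c (n-d-p) x))) has_real_derivative D d p) (at x)" for d p
      unfolding D_def
      apply (auto intro!: derivative_eq_intros dc dc1 dc2 dv)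
      by (simp add: field_simps)
    then show ?thesis unfolding Qr_def by (intro DERIV_sum)
  qed
  have inner: "(\<Sum>p\<le>n-d. D d p) = (\<Sum>p\<le>n-d. c p x * Jr ep v v1 c c1 c3 d (n-d-p) x)" for d
  proof -
    define M where "M = n - d"
    define h where "h p q = ep d / 4 * (1/2 * (c1 p x * c2 q x - c2 p x * c1 q x))
       + 1/2 * (v d x * (c1 p x * c q x - c p x * c1 q x))" for p q
    have "\<And>p. p \<le> M \<Longrightarrow> D d p - c p x * Jr ep v v1 c c1 c3 d (n-d-p) x = h p (M - p)"
      by (simp add: D_def Jr_def h_def M_def algebra_simps)
    then have "(\<Sum>p\<le>M. D d p - c p x * Jr ep v v1 c c1 c3 d (n-d-p) x) = (\<Sum>p\<le>M. h p (M-p))"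
      by (intro sum.cong) auto
    also have "\<dots> = 0" by (rule sum_antisym) (simp add: h_def algebra_simps)
    finally show ?thesis by (simp add: M_def sum_subtractf)
  qed
  have "(\<Sum>d\<le>n. \<Sum>p\<le>n-d. D d p) = (\<Sum>d\<le>n. \<Sum>p\<le>n-d. c p x * Jr ep v v1 c c1 c3 d (n-d-p) x)"
    using inner by simp
  also have "\<dots> = (\<Sum>p\<le>n. \<Sum>d\<le>n-p. c p x * Jr ep v v1 c c1 c3 d (n-d-p) x)"
    by (rule tri_swap)
  also have "\<dots> = (\<Sum>p\<le>n. c p x * (\<Sum>d\<le>n-p. Jr ep v v1 c c1 c3 d (n-p-d) x))"
    by (simp add: sum_distrib_left diff_commute add.commute)
  finally show ?thesis using der by simp
qed

lemma Ezero:
  fixes E :: "nat \<Rightarrow> real" and c :: "nat \<Rightarrow> real"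
  assumes "\<And>n. (\<Sum>p\<le>n. c p * E (n-p)) = 0" "c 0 \<noteq> 0"
  shows "E r = 0"
proof (induction r rule: less_induct)
  case (less r)
  have "(\<Sum>p\<le>r. c p * E (r-p)) = c 0 * E r + (\<Sum>p\<in>{1..r}. c p * E (r-p))"
    by (simp add: atMost_atLeast0 sum.atLeast_Suc_atMost)
  also have "(\<Sum>p\<in>{1..r}. c p * E (r-p)) = 0"
    by (rule sum.neutral) (auto simp: less)
  finally show ?case using assms by simp
qed



definition Sm :: "(nat \<Rightarrow> ex) \<Rightarrow> nat list \<Rightarrow> ex" where
  "Sm f xs = foldr (\<lambda>x acc. Ad (f x) acc) xs (C 0)"

lemma ev_Sm_list: "ev (Sm f xs) j = sum_list (map (\<lambda>x. ev (f x) j) xs)"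
  by (induction xs) (auto simp: Sm_def)

lemma ev_Sm: "ev (Sm f [0..<Suc n]) j = (\<Sum>x\<le>n. ev (f x) j)"
  by (simp only: ev_Sm_list sum_list_distinct_conv_sum_set[OF distinct_upt] set_upt)
     (simp add: atLeast0LessThan lessThan_Suc_atMost)

lemma wf_Sm: "(\<forall>x\<in>set xs. wf N (f x)) \<Longrightarrow> wf N (Sm f xs)"
  by (induction xs) (auto simp: Sm_def)

definition Tex :: "(nat \<Rightarrow> real) \<Rightarrow> (nat \<Rightarrow> ex) \<Rightarrow> nat \<Rightarrow> ex \<Rightarrow> ex \<Rightarrow> ex" where
  "Tex ep vx d a b = Ad (Mu (C (ep d / 4)) (Ad (Mu a (Dx (Dx b))) (Mu (C (-1/2)) (Mu (Dx a) (Dx b)))))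
     (Mu (C (1/2)) (Mu (vx d) (Mu a b)))"

definition Qex :: "(nat \<Rightarrow> real) \<Rightarrow> (nat \<Rightarrow> ex) \<Rightarrow> nat \<Rightarrow> (nat \<Rightarrow> ex) \<Rightarrow> ex" where
  "Qex ep vx n f = Sm (\<lambda>d. Sm (\<lambda>p. Tex ep vx d (f p) (f (n-d-p))) [0..<Suc (n-d)]) [0..<Suc n]"

lemma ev_Qex: "ev (Qex ep vx n f) j = Qr ep (\<lambda>d. ev (vx d) j) n (\<lambda>p. ev (f p) j)
    (\<lambda>p. ev (Dx (f p)) j) (\<lambda>p. ev (Dx (Dx (f p))) j)"
  by (simp add: Qex_def ev_Sm Tex_def Qr_def del: upt_Suc)

lemma wf_Qex: "\<forall>d. wf N (vx d) \<Longrightarrow> \<forall>p\<le>n. wf N (f p) \<Longrightarrow> wf N (Qex ep vx n f)"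
  unfolding Qex_def Tex_def
  apply (rule wf_Sm) apply (intro ballI wf_Sm) by (auto simp: wf_Dx)

fun cs :: "(nat \<Rightarrow> real) \<Rightarrow> (nat \<Rightarrow> ex) \<Rightarrow> ex \<Rightarrow> ex \<Rightarrow> nat \<Rightarrow> ex list" where
  "cs ep vx c0 K 0 = [c0]"
| "cs ep vx c0 K (Suc n) = cs ep vx c0 K n @
     [Mu K (Qex ep vx (Suc n) (\<lambda>p. if p < Suc n then cs ep vx c0 K n ! p else C 0))]"

definition cq where "cq ep vx c0 K n = cs ep vx c0 K n ! n"

lemma cs_len: "length (cs ep vx c0 K n) = Suc n"
  by (induction n) auto

lemma cs_nth: "p \<le> n \<Longrightarrow> cs ep vx c0 K n ! p = cq ep vx c0 K p"
proof (induction n)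
  case 0 then show ?case by (simp add: cq_def)
next
  case (Suc n)
  show ?case
  proof (cases "p = Suc n")
    case True then show ?thesis by (simp add: cq_def)
  next
    case False
    then have "p \<le> n" using Suc by simp
    then show ?thesis using Suc by (simp add: nth_append cs_len)
  qed
qed

lemma cq_0: "cq ep vx c0 K 0 = c0" by (simp add: cq_def)

lemma cq_Suc: "cq ep vx c0 K (Suc n) =
   Mu K (Qex ep vx (Suc n) (\<lambda>p. if p < Suc n then cq ep vx c0 K p else C 0))"
proof -
  have "(\<lambda>p. if p < Suc n then cs ep vx c0 K n ! p else C 0) = (\<lambda>p. if p < Suc n then cq ep vx c0 K p else C 0)"
    by (auto simp: cs_nth)
  then show ?thesis by (simp add: cq_def nth_append cs_len)
qed

lemma wf_cq:
  assumes "wf N c0" "wf N K" "\<forall>d. wf N (vx d)"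
  shows "wf N (cq ep vx c0 K n)"
proof (induction n rule: less_induct)
  case (less n)
  show ?case
  proof (cases n)
    case 0 then show ?thesis by (simp add: cq_0 assms)
  next
    case (Suc m)
    have "wf N (Qex ep vx (Suc m) (\<lambda>p. if p < Suc m then cq ep vx c0 K p else C 0))"
      using Suc less assms by (intro wf_Qex) auto
    then show ?thesis using Suc assms by (simp add: cq_Suc)
  qed
qed

lemma chain:
  assumes adm: "admissible N u" and wfs: "wf N c0" "wf N K" "\<forall>d. wf N (vx d)"
    and ep0: "ep 0 = 0"
    and c0nz: "\<And>x. ev c0 (jet_of u x) \<noteq> 0"
    and Kinv: "\<And>x. ev K (jet_of u x) * ev (vx 0) (jet_of u x) * ev c0 (jet_of u x) = -1"
    and kap: "\<And>x. ev (vx 0) (jet_of u x) * (ev c0 (jet_of u x))^2 = \<kappa>"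
  shows "(\<Sum>d\<le>r. Jr ep (\<lambda>d x. ev (vx d) (jet_of u x)) (\<lambda>d x. ev (Dx (vx d)) (jet_of u x))
      (\<lambda>p x. ev (cq ep vx c0 K p) (jet_of u x)) (\<lambda>p x. ev (Dx (cq ep vx c0 K p)) (jet_of u x))
      (\<lambda>p x. ev (Dx (Dx (Dx (cq ep vx c0 K p)))) (jet_of u x)) d (r-d) x) = 0"
proof -
  define c where "c p x = ev (cq ep vx c0 K p) (jet_of u x)" for p x
  define c1 where "c1 p x = ev (Dx (cq ep vx c0 K p)) (jet_of u x)" for p x
  define c2 where "c2 p x = ev (Dx (Dx (cq ep vx c0 K p))) (jet_of u x)" for p x
  define c3 where "c3 p x = ev (Dx (Dx (Dx (cq ep vx c0 K p)))) (jet_of u x)" for p x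
  define v where "v d x = ev (vx d) (jet_of u x)" for d x
  define v1 where "v1 d x = ev (Dx (vx d)) (jet_of u x)" for d x
  have wq: "wf N (cq ep vx c0 K p)" for p using wf_cq wfs by blast
  have dc: "(c p has_real_derivative c1 p x) (at x)" for p x
    unfolding c_def c1_def using ev_DERIV[OF adm wq] by simp
  have dc1: "(c1 p has_real_derivative c2 p x) (at x)" for p x
    unfolding c2_def c1_def using ev_DERIV[OF adm wf_Dx[OF wq]] by simp
  have dc2: "(c2 p has_real_derivative c3 p x) (at x)" for p x
    unfolding c2_def c3_def using ev_DERIV[OF adm wf_Dx[OF wf_Dx[OF wq]]] by simp
  have dv: "(v d has_real_derivative v1 d x) (at x)" for d x
    unfolding v_def v1_def using ev_DERIV[OF adm] wfs(3) by simp
  define Qf where "Qf n x = Qr ep (\<lambda>d. v d x) n (\<lambda>p. c p x) (\<lambda>p. c1 p x) (\<lambda>p. c2 p x)" for n x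
  have Qc: "Qf n x = (if n = 0 then \<kappa> / 2 else 0)" for n x
  proof (cases n)
    case 0
    then show ?thesis using kap[of x] ep0
      by (simp add: Qf_def Qr_def v_def c_def cq_0 power2_eq_square algebra_simps)
  next
    case (Suc m)
    define f where "f p = (if p < Suc m then cq ep vx c0 K p else C 0)" for p
    define G where "G p = ev (f p) (jet_of u x)" for p
    define G1 where "G1 p = ev (Dx (f p)) (jet_of u x)" for p
    define G2 where "G2 p = ev (Dx (Dx (f p))) (jet_of u x)" for p
    have QG: "ev (Qex ep vx n f) (jet_of u x) = Qr ep (\<lambda>d. v d x) n G G1 G2"
      by (simp add: ev_Qex G_def[abs_def] G1_def[abs_def] G2_def[abs_def] v_def)
    have cn: "c n x = ev K (jet_of u x) * Qr ep (\<lambda>d. v d x) n G G1 G2"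
    proof -
      have "cq ep vx c0 K n = Mu K (Qex ep vx n f)" unfolding f_def[abs_def] Suc by (rule cq_Suc)
      then show ?thesis using QG by (simp add: c_def)
    qed
    have "Qf n x = Qr ep (\<lambda>d. v d x) n G G1 G2 + v 0 x * c 0 x * c n x"
      unfolding Qf_def
      by (rule Qsplit) (auto simp: ep0 Suc G_def G1_def G2_def f_def c_def c1_def c2_def)
    also have "\<dots> = Qr ep (\<lambda>d. v d x) n G G1 G2 * (1 + ev K (jet_of u x) * v 0 x * c 0 x)"
      by (simp add: cn algebra_simps)
    also have "ev K (jet_of u x) * v 0 x * c 0 x = -1"
      using Kinv by (simp add: v_def c_def cq_0)
    finally show ?thesis using Suc by simp
  qed
  have E: "(\<Sum>p\<le>n. c p x * (\<Sum>d\<le>n-p. Jr ep v v1 c c1 c3 d (n-p-d) x)) = 0" for n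
  proof -
    have "(Qf n has_real_derivative (\<Sum>p\<le>n. c p x * (\<Sum>d\<le>n-p. Jr ep v v1 c c1 c3 d (n-p-d) x))) (at x)"
      unfolding Qf_def by (rule Qderiv[OF dc dc1 dc2 dv])
    moreover have "(Qf n has_real_derivative 0) (at x)"
    proof -
      have "Qf n = (\<lambda>x. if n = 0 then \<kappa> / 2 else 0)" using Qc by auto
      then show ?thesis by simp
    qed
    ultimately show ?thesis using DERIV_unique by blast
  qed
  have "(\<Sum>d\<le>r. Jr ep v v1 c c1 c3 d (r-d) x) = 0"
    apply (rule Ezero[where c="\<lambda>p. c p x"])
    subgoal for n using E[of n] by simp
    subgoal using c0nz by (simp add: c_def cq_0)
    done
  then show ?thesis unfolding v_def[abs_def] v1_def[abs_def] c_def[abs_def] c1_def[abs_def] c3_def[abs_def] .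
qed



lemma jet00: "jet_of u x i 0 = u i x" by (simp add: jet_of_def)
lemma jet01: "jet_of u x i 1 = deriv (u i) x" by (simp add: jet_of_def)

lemma Jop_ev:
  assumes adm: "admissible N u" and we: "wf N e" and i: "i < N"
  shows "Jop N eps u i (\<lambda>x. ev e (jet_of u x)) x =
    eps i / 4 * ev (Dx (Dx (Dx e))) (jet_of u x) + 1/2 * (ev (V i 0) (jet_of u x) * ev (Dx e) (jet_of u x)
      + (ev (Dx (V i 0)) (jet_of u x) * ev e (jet_of u x) + ev (V i 0) (jet_of u x) * ev (Dx e) (jet_of u x)))"
proof -
  have w: "wf N (Mu (V i 0) e)" using we i by simp
  have e3: "(deriv ^^ 3) (\<lambda>x. ev e (jet_of u x)) = (\<lambda>x. ev (Dx (Dx (Dx e))) (jet_of u x))"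
    using ev_derivn[OF adm we, of 3] by (simp add: numeral_3_eq_3)
  have pr: "(\<lambda>y. u i y * ev e (jet_of u y)) = (\<lambda>y. ev (Mu (V i 0) e) (jet_of u y))"
    by (simp add: jet00)
  have ux: "uext N u i = u i" using i by (simp add: uext_def)
  show ?thesis
    unfolding Jop_def ux pr ev_deriv[OF adm w] e3 ev_deriv[OF adm we]
    by (simp add: jet00 algebra_simps)
qed

lemma sum_cut:
  fixes F :: "nat \<Rightarrow> real"
  assumes "\<And>d. d > N \<Longrightarrow> F d = 0"
  shows "(\<Sum>d\<le>r. F d) = (\<Sum>d\<le>N. if d \<le> r then F d else 0)"
proof -
  have "(\<Sum>d\<le>r. F d) = (\<Sum>d\<in>{..min r N}. F d)"
    apply (rule sum.mono_neutral_right) apply auto using assms not_le by blast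
  also have "\<dots> = (\<Sum>d\<in>{..N} \<inter> {d. d \<le> r}. F d)"
    by (rule sum.cong) auto
  also have "\<dots> = (\<Sum>d\<le>N. if d \<le> r then F d else 0)"
    by (simp add: sum.inter_restrict)
  finally show ?thesis .
qed

lemma sum_rev1: "(\<Sum>j\<in>{1..N}. g (N + 1 - j)) = (\<Sum>d\<in>{1..(N::nat)}. (g d :: real))"
  by (rule sum.reindex_bij_witness[where i="\<lambda>x. N+1-x" and j="\<lambda>x. N+1-x"]) auto

lemma sum_shift1: "(\<Sum>j\<in>{1..N}. g (j - 1)) = (\<Sum>k<(N::nat). (g k :: real))"
  by (rule sum.reindex_bij_witness[where i="\<lambda>k. k+1" and j="\<lambda>j. j - 1"]) auto

definition epP :: "nat \<Rightarrow> (nat \<Rightarrow> real) \<Rightarrow> nat \<Rightarrow> real" where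
  "epP N eps d = (if d = 0 \<or> N < d then 0 else eps (N-d))"
definition vxP :: "nat \<Rightarrow> nat \<Rightarrow> ex" where
  "vxP N d = (if d = 0 then C (-1) else if d \<le> N then V (N-d) 0 else C 0)"
definition epM :: "nat \<Rightarrow> (nat \<Rightarrow> real) \<Rightarrow> nat \<Rightarrow> real" where
  "epM N eps d = (if d \<le> N then eps d else 0)"
definition vxM :: "nat \<Rightarrow> nat \<Rightarrow> ex" where
  "vxM N d = (if d < N then V d 0 else if d = N then C (-1) else C 0)"
definition cP where "cP N eps n = cq (epP N eps) (vxP N) (C 2) (C (1/2)) n"
definition cM where "cM N eps n = cq (epM N eps) (vxM N) (P 1) (Mu (C (-1)) (P 1)) n"
definition aex :: "nat \<Rightarrow> (nat \<Rightarrow> real) \<Rightarrow> int \<Rightarrow> ex" where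
  "aex N eps n = (if n \<ge> 0 then cP N eps (nat n) else if n > - int N then C 0 else cM N eps (nat (- int N - n)))"

lemma wf_vxP: "wf N (vxP N d)" by (simp add: vxP_def)
lemma wf_vxM: "wf N (vxM N d)" by (simp add: vxM_def)
lemma wf_cP: "wf N (cP N eps n)" unfolding cP_def by (rule wf_cq) (auto simp: wf_vxP)
lemma wf_cM: "0 < N \<Longrightarrow> wf N (cM N eps n)" unfolding cM_def by (rule wf_cq) (auto simp: wf_vxM)
lemma wf_aex: "0 < N \<Longrightarrow> wf N (aex N eps n)" by (simp add: aex_def wf_cP wf_cM)



lemma pos_rel:
  assumes N: "0 < N" and adm: "admissible N u"
  shows "deriv (\<lambda>x. ev (cP N eps (Suc s)) (jet_of u x)) x =
    (\<Sum>j=1..N. Jop N eps u (j-1) (\<lambda>x. ev (aex N eps (int s - int N + int j)) (jet_of u x)) x)"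
proof -
  define r where "r = Suc s"
  define JrP where "JrP d q = Jr (epP N eps) (\<lambda>d x. ev (vxP N d) (jet_of u x)) (\<lambda>d x. ev (Dx (vxP N d)) (jet_of u x))
      (\<lambda>p x. ev (cP N eps p) (jet_of u x)) (\<lambda>p x. ev (Dx (cP N eps p)) (jet_of u x))
      (\<lambda>p x. ev (Dx (Dx (Dx (cP N eps p)))) (jet_of u x)) d q x" for d q
  have ch: "(\<Sum>d\<le>r. JrP d (r-d)) = 0"
    unfolding JrP_def cP_def
    by (rule chain[OF adm, where \<kappa>="-4"]) (auto simp: wf_vxP epP_def vxP_def N)
  have J0: "JrP 0 q = - ev (Dx (cP N eps q)) (jet_of u x)" for q
    by (simp add: JrP_def Jr_def epP_def vxP_def)
  have Jbig: "JrP d q = 0" if "d > N" for d q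
    using that by (simp add: JrP_def Jr_def epP_def vxP_def)
  define h where "h d = (if d \<le> r then JrP d (r-d) else 0)" for d
  have jop: "Jop N eps u (j-1) (\<lambda>x. ev (aex N eps (int s - int N + int j)) (jet_of u x)) x = h (N + 1 - j)"
    if j: "j \<in> {1..N}" for j
  proof (cases "N \<le> s + j")
    case True
    then have a: "aex N eps (int s - int N + int j) = cP N eps (s + j - N)"
      by (simp add: aex_def nat_diff_distrib' of_nat_diff[symmetric] algebra_simps)
         (smt (verit) of_nat_add nat_int int_ops(6))
    have hd: "h (N + 1 - j) = JrP (N + 1 - j) (s + j - N)"
      using True j by (simp add: h_def r_def)
    have e1: "N - (N + 1 - j) = j - 1" using j by auto
    have jj: "j - 1 < N" and nb: "\<not> N < N + 1 - j" and nz: "N + 1 - j \<noteq> 0" "N + 1 - j \<le> N" using j by auto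
    show ?thesis unfolding a hd Jop_ev[OF adm wf_cP jj]
      using nb nz by (simp add: JrP_def Jr_def epP_def vxP_def e1)
  next
    case False
    then have a: "aex N eps (int s - int N + int j) = C 0"
      using j by (simp add: aex_def)
    have hd: "h (N + 1 - j) = 0" using False j by (simp add: h_def r_def)
    have jj: "j - 1 < N" using j by auto
    have z: "Jop N eps u (j-1) (\<lambda>x. ev (C 0) (jet_of u x)) x = 0"
      using Jop_ev[OF adm _ jj, of "C 0" eps x] by simp
    show ?thesis unfolding a hd using z by simp
  qed
  have "(\<Sum>j=1..N. Jop N eps u (j-1) (\<lambda>x. ev (aex N eps (int s - int N + int j)) (jet_of u x)) x)
      = (\<Sum>j=1..N. h (N + 1 - j))" by (rule sum.cong[OF refl]) (rule jop)
  also have "\<dots> = (\<Sum>d=1..N. h d)" by (rule sum_rev1)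
  finally have R: "(\<Sum>j=1..N. Jop N eps u (j-1) (\<lambda>x. ev (aex N eps (int s - int N + int j)) (jet_of u x)) x)
      = (\<Sum>d=1..N. h d)" .
  have "(\<Sum>d\<le>r. JrP d (r-d)) = (\<Sum>d\<le>N. h d)"
    unfolding h_def by (rule sum_cut) (simp add: Jbig)
  also have "\<dots> = h 0 + (\<Sum>d=1..N. h d)"
    by (simp add: atMost_atLeast0 sum.atLeast_Suc_atMost)
  finally have "ev (Dx (cP N eps r)) (jet_of u x) = (\<Sum>d=1..N. h d)"
    using ch by (simp add: h_def J0)
  then show ?thesis using R by (simp add: ev_deriv[OF adm wf_cP] r_def)
qed



lemma neg_rel:
  assumes N: "0 < N" and adm: "admissible N u" and e0: "eps 0 = 0" and eN: "eps N = 0" and s: "1 \<le> s"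
  shows "deriv (\<lambda>x. ev (aex N eps (- int s)) (jet_of u x)) x =
    (\<Sum>j=1..N. Jop N eps u (j-1) (\<lambda>x. ev (aex N eps (- int s - 1 - int N + int j)) (jet_of u x)) x)"
proof -
  define JrM where "JrM d q = Jr (epM N eps) (\<lambda>d x. ev (vxM N d) (jet_of u x)) (\<lambda>d x. ev (Dx (vxM N d)) (jet_of u x))
      (\<lambda>p x. ev (cM N eps p) (jet_of u x)) (\<lambda>p x. ev (Dx (cM N eps p)) (jet_of u x))
      (\<lambda>p x. ev (Dx (Dx (Dx (cM N eps p)))) (jet_of u x)) d q x" for d q
  have pos: "\<And>x. u 0 x > 0" using adm by (simp add: admissible_def)
  have ch: "(\<Sum>d\<le>s. JrM d (s-d)) = 0"
    unfolding JrM_def cM_def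
  proof (rule chain[OF adm, where \<kappa>="1"])
    show "wf N (P 1)" "wf N (Mu (C (- 1)) (P 1))" "\<forall>d. wf N (vxM N d)" using N by (auto simp: wf_vxM)
    show "epM N eps 0 = 0" using e0 by (simp add: epM_def)
    fix x
    have p: "u 0 x > 0" by (rule pos)
    show "ev (P 1) (jet_of u x) \<noteq> 0" using p by (simp add: jet00)
    show "ev (Mu (C (- 1)) (P 1)) (jet_of u x) * ev (vxM N 0) (jet_of u x) * ev (P 1) (jet_of u x) = - 1"
      using p N by (simp add: jet00 vxM_def field_simps)
    show "ev (vxM N 0) (jet_of u x) * (ev (P 1) (jet_of u x))\<^sup>2 = 1"
      using p N by (simp add: jet00 vxM_def field_simps power2_eq_square)
  qed
  have JN: "JrM N q = - ev (Dx (cM N eps q)) (jet_of u x)" for q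
    by (simp add: JrM_def Jr_def epM_def vxM_def eN)
  have Jbig: "JrM d q = 0" if "d > N" for d q
    using that by (simp add: JrM_def Jr_def epM_def vxM_def)
  define h where "h d = (if d \<le> s then JrM d (s-d) else 0)" for d
  have jop: "Jop N eps u (j-1) (\<lambda>x. ev (aex N eps (- int s - 1 - int N + int j)) (jet_of u x)) x = h (j - 1)"
    if j: "j \<in> {1..N}" for j
  proof -
    have jj: "j - 1 < N" using j by auto
    show ?thesis
    proof (cases "j - 1 \<le> s")
      case True
      then have a: "aex N eps (- int s - 1 - int N + int j) = cM N eps (s - (j - 1))"
      proof -
        have c1: "- int N - (- int s - 1 - int N + int j) = int (s - (j - 1))"
          using True j by (simp add: of_nat_diff)
        have c2: "\<not> (- int s - 1 - int N + int j \<ge> 0)" "\<not> (- int s - 1 - int N + int j > - int N)"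
        proof -
          have h1: "int j \<le> int s + 1" "1 \<le> int N" using True j N by auto
          show "\<not> (- int s - 1 - int N + int j \<ge> 0)" using h1 by linarith
          show "\<not> (- int s - 1 - int N + int j > - int N)" using h1 by linarith
        qed
        show ?thesis unfolding aex_def using c2 by (simp only: if_False c1 nat_int)
      qed
      have hd: "h (j - 1) = JrM (j - 1) (s - (j - 1))"
        using True by (simp add: h_def)
      show ?thesis unfolding a hd Jop_ev[OF adm wf_cM[OF N] jj]
        using jj by (simp add: JrM_def Jr_def epM_def vxM_def)
    next
      case False
      then have c: "int s + 1 < int j" using j by linarith
      then have a: "aex N eps (- int s - 1 - int N + int j) = C 0"
        using j by (simp add: aex_def)
      have hd: "h (j - 1) = 0" using False by (simp add: h_def)
      have z: "Jop N eps u (j-1) (\<lambda>x. ev (C 0) (jet_of u x)) x = 0"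
        using Jop_ev[OF adm _ jj, of "C 0" eps x] by simp
      show ?thesis unfolding a hd using z by simp
    qed
  qed
  have "(\<Sum>j=1..N. Jop N eps u (j-1) (\<lambda>x. ev (aex N eps (- int s - 1 - int N + int j)) (jet_of u x)) x)
      = (\<Sum>j=1..N. h (j - 1))" by (rule sum.cong[OF refl]) (rule jop)
  also have "\<dots> = (\<Sum>k<N. h k)" by (rule sum_shift1)
  finally have R: "(\<Sum>j=1..N. Jop N eps u (j-1) (\<lambda>x. ev (aex N eps (- int s - 1 - int N + int j)) (jet_of u x)) x)
      = (\<Sum>k<N. h k)" .
  have "(\<Sum>d\<le>s. JrM d (s-d)) = (\<Sum>d\<le>N. h d)"
    unfolding h_def by (rule sum_cut) (simp add: Jbig)
  also have "\<dots> = (\<Sum>k<N. h k) + h N"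
    by (simp add: lessThan_Suc_atMost[symmetric])
  finally have R2: "(\<Sum>k<N. h k) = - h N" using ch by simp
  have L: "deriv (\<lambda>x. ev (aex N eps (- int s)) (jet_of u x)) x = - h N"
  proof (cases "N \<le> s")
    case True
    then have a: "aex N eps (- int s) = cM N eps (s - N)"
    proof -
      have "nat (int s - int N) = s - N" using True by linarith
      then show ?thesis using N s True by (simp add: aex_def)
    qed
    show ?thesis unfolding a using True by (simp add: ev_deriv[OF adm wf_cM[OF N]] h_def JN)
  next
    case False
    then have a: "aex N eps (- int s) = C 0" using s by (simp add: aex_def)
    show ?thesis unfolding a using False by (simp add: h_def)
  qed
  show ?thesis using L R R2 by simp
qed



theorem mainTheorem7:
  fixes N :: nat and eps :: "nat \<Rightarrow> real"
  assumes "N \<ge> 1" and "eps 0 = 0" and "eps N = 0"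
  shows "\<exists>\<Gamma> :: int \<Rightarrow> nat \<Rightarrow> jet \<Rightarrow> real.
     (\<forall>s. \<forall>i\<in>{1..N}. local_fun N (\<Gamma> s i)) \<and>
     (\<forall>i\<in>{1..N}. \<Gamma> 0 i = (\<lambda>j. if i = N then 2 else 0)) \<and>
     (\<forall>i\<in>{1..N}. \<Gamma> (-1) i = (\<lambda>j. if i = 1 then 1 / sqrt (j 0 0) else 0)) \<and>
     (\<forall>u. admissible N u \<longrightarrow>
        (\<forall>s. \<forall>i\<in>{1..N}. smooth_fun (\<lambda>x. \<Gamma> s i (jet_of u x))) \<and>
        (\<forall>s::int. s \<ge> 0 \<longrightarrow>
           Rdag_rel N eps u (\<lambda>i x. \<Gamma> s i (jet_of u x)) (\<lambda>i x. \<Gamma> (s + 1) i (jet_of u x))) \<and>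
        (\<forall>s::int. s \<ge> 1 \<longrightarrow>
           Rdag_rel N eps u (\<lambda>i x. \<Gamma> (- s - 1) i (jet_of u x)) (\<lambda>i x. \<Gamma> (- s) i (jet_of u x))))"
proof -
  have N: "0 < N" using assms(1) by simp
  define \<Gamma> where "\<Gamma> s i = ev (aex N eps (s - int N + int i))" for s :: int and i :: nat
  have L: "\<forall>s. \<forall>i\<in>{1..N}. local_fun N (\<Gamma> s i)"
    unfolding \<Gamma>_def using ev_local[OF wf_aex[OF N]] by blast
  have G0: "\<forall>i\<in>{1..N}. \<Gamma> 0 i = (\<lambda>j. if i = N then 2 else 0)"
  proof
    fix i assume i: "i \<in> {1..N}"
    show "\<Gamma> 0 i = (\<lambda>j. if i = N then 2 else 0)"
    proof (cases "i = N")
      case True then show ?thesis by (simp add: \<Gamma>_def aex_def cP_def cq_0 fun_eq_iff)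
    next
      case False then show ?thesis using i by (simp add: \<Gamma>_def aex_def fun_eq_iff)
    qed
  qed
  have G1: "\<forall>i\<in>{1..N}. \<Gamma> (-1) i = (\<lambda>j. if i = 1 then 1 / sqrt (j 0 0) else 0)"
  proof
    fix i assume i: "i \<in> {1..N}"
    show "\<Gamma> (-1) i = (\<lambda>j. if i = 1 then 1 / sqrt (j 0 0) else 0)"
    proof (cases "i = 1")
      case True then show ?thesis using N by (simp add: \<Gamma>_def aex_def cM_def cq_0 divide_inverse fun_eq_iff)
    next
      case False then show ?thesis using i by (simp add: \<Gamma>_def aex_def fun_eq_iff)
    qed
  qed
  have U: "admissible N u \<longrightarrow>
        (\<forall>s. \<forall>i\<in>{1..N}. smooth_fun (\<lambda>x. \<Gamma> s i (jet_of u x))) \<and>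
        (\<forall>s::int. s \<ge> 0 \<longrightarrow>
           Rdag_rel N eps u (\<lambda>i x. \<Gamma> s i (jet_of u x)) (\<lambda>i x. \<Gamma> (s + 1) i (jet_of u x))) \<and>
        (\<forall>s::int. s \<ge> 1 \<longrightarrow>
           Rdag_rel N eps u (\<lambda>i x. \<Gamma> (- s - 1) i (jet_of u x)) (\<lambda>i x. \<Gamma> (- s) i (jet_of u x)))" for u
  proof
    assume adm: "admissible N u"
    have S: "\<forall>s. \<forall>i\<in>{1..N}. smooth_fun (\<lambda>x. \<Gamma> s i (jet_of u x))"
      unfolding \<Gamma>_def using ev_smooth[OF adm wf_aex[OF N]] by blast
    have P: "Rdag_rel N eps u (\<lambda>i x. \<Gamma> s i (jet_of u x)) (\<lambda>i x. \<Gamma> (s + 1) i (jet_of u x))"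
      if s0: "s \<ge> 0" for s :: int
    proof -
      obtain s' where s': "s = int s'" using s0 nonneg_eq_int by blast
      have a: "\<forall>i\<in>{1..<N}. \<forall>x. \<Gamma> (s + 1) i (jet_of u x) = \<Gamma> s (Suc i) (jet_of u x)"
        by (simp add: \<Gamma>_def algebra_simps)
      have b: "deriv (\<lambda>x. \<Gamma> (s + 1) N (jet_of u x)) x =
          (\<Sum>j=1..N. Jop N eps u (j - 1) (\<lambda>x. \<Gamma> s j (jet_of u x)) x)" for x
      proof -
        have "aex N eps (s + 1 - int N + int N) = cP N eps (Suc s')"
        proof -
          have "nat (int s' + 1) = Suc s'" by simp
          then show ?thesis using s' by (simp add: aex_def)
        qed
        then show ?thesis unfolding \<Gamma>_def s' using pos_rel[OF N adm, of eps s' x] by simp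
      qed
      show ?thesis unfolding Rdag_rel_def using a b by blast
    qed
    have M: "Rdag_rel N eps u (\<lambda>i x. \<Gamma> (- s - 1) i (jet_of u x)) (\<lambda>i x. \<Gamma> (- s) i (jet_of u x))"
      if s1: "s \<ge> 1" for s :: int
    proof -
      obtain s' where s': "s = int s'" using s1 nonneg_eq_int[of s] by auto
      have s1': "1 \<le> s'" using s1 s' by simp
      have a: "\<forall>i\<in>{1..<N}. \<forall>x. \<Gamma> (- s) i (jet_of u x) = \<Gamma> (- s - 1) (Suc i) (jet_of u x)"
        by (simp add: \<Gamma>_def algebra_simps)
      have b: "deriv (\<lambda>x. \<Gamma> (- s) N (jet_of u x)) x =
          (\<Sum>j=1..N. Jop N eps u (j - 1) (\<lambda>x. \<Gamma> (- s - 1) j (jet_of u x)) x)" for x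
        unfolding \<Gamma>_def s' using neg_rel[OF N adm assms(2) assms(3) s1', of x] by simp
      show ?thesis unfolding Rdag_rel_def using a b by blast
    qed
    show "(\<forall>s. \<forall>i\<in>{1..N}. smooth_fun (\<lambda>x. \<Gamma> s i (jet_of u x))) \<and>
        (\<forall>s::int. s \<ge> 0 \<longrightarrow>
           Rdag_rel N eps u (\<lambda>i x. \<Gamma> s i (jet_of u x)) (\<lambda>i x. \<Gamma> (s + 1) i (jet_of u x))) \<and>
        (\<forall>s::int. s \<ge> 1 \<longrightarrow>
           Rdag_rel N eps u (\<lambda>i x. \<Gamma> (- s - 1) i (jet_of u x)) (\<lambda>i x. \<Gamma> (- s) i (jet_of u x)))"
      using S P M by blast
  qed
  show ?thesis using L G0 G1 U by blast
qed

end
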